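(* Let $C$ be a coalgebra over a field. If $C$ is left quasi-co-Frobenius, then $C^*$ is left Rat-Kasch.
   Context: Every right $C$-comodule $M$ is a left $C^*$-module via $f\rightharpoonup m=\sum m_0f(m_1)$; the left $C^*$-modules arising this way are called rational, and rational left $C^*$-modules are the same as right $C$-comodules. In particular $C$ is a left (and similarly right) $C^*$-module. $C$ is left quasi-co-Frobenius (left QcF) if $C$, as a left $C^*$-module, embeds in a direct product of copies of $C^*$ (equivalently, $C$ is projective as a right $C$-comodule). $C^*$ is left Rat-Kasch if every simple rational left $C^*$-module embeds in $C^*$ as a left $C^*$-module. *)

theory Defs
  imports Complex_Main
begin

text \<open>Elements of tensor products are represented by finite
lists of simple tensors; all identities between tensors are tested by pairing
with Vector_Spaces.linear functionals (the canonical maps V1 x...x Vn tensor to multilinear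
forms on the duals are injective over a field).\<close>

definition dual :: "('k::field \<Rightarrow> 'c::ab_group_add \<Rightarrow> 'c) \<Rightarrow> ('c \<Rightarrow> 'k) set" where
  "dual sc = {f. Vector_Spaces.linear sc (*) f}"

definition tens :: "('a \<times> 'b) list \<Rightarrow> ('a \<Rightarrow> 'k::comm_ring_1) \<Rightarrow> ('b \<Rightarrow> 'k) \<Rightarrow> 'k" where
  "tens xs f g = (\<Sum>(a,b)\<leftarrow>xs. f a * g b)"

definition is_coalgebra ::
  "('k::field \<Rightarrow> 'c::ab_group_add \<Rightarrow> 'c) \<Rightarrow> ('c \<Rightarrow> ('c \<times> 'c) list) \<Rightarrow> ('c \<Rightarrow> 'k) \<Rightarrow> bool" where
  "is_coalgebra sc Delta eps \<longleftrightarrow>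
     vector_space sc \<and> eps \<in> dual sc \<and>
     \<comment> \<open>Delta : C \<rightarrow> C \<otimes> C is k-Vector_Spaces.linear\<close>
     (\<forall>f\<in>dual sc. \<forall>g\<in>dual sc. \<forall>x y r.
        tens (Delta (x + y)) f g = tens (Delta x) f g + tens (Delta y) f g \<and>
        tens (Delta (sc r x)) f g = r * tens (Delta x) f g) \<and>
     \<comment> \<open>counit property\<close>
     (\<forall>c. (\<Sum>(a,b)\<leftarrow>Delta c. sc (eps a) b) = c \<and> (\<Sum>(a,b)\<leftarrow>Delta c. sc (eps b) a) = c) \<and>
     \<comment> \<open>coassociativity\<close>
     (\<forall>f\<in>dual sc. \<forall>g\<in>dual sc. \<forall>h\<in>dual sc. \<forall>c.
        (\<Sum>(a,b)\<leftarrow>Delta c. tens (Delta a) f g * h b) = (\<Sum>(a,b)\<leftarrow>Delta c. f a * tens (Delta b) g h))"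

definition conv :: "('c \<Rightarrow> ('c \<times> 'c) list) \<Rightarrow> ('c \<Rightarrow> 'k::comm_ring_1) \<Rightarrow> ('c \<Rightarrow> 'k) \<Rightarrow> 'c \<Rightarrow> 'k" where
  "conv Delta f g = (\<lambda>c. tens (Delta c) f g)"

definition hit :: "('k::field \<Rightarrow> 'c::ab_group_add \<Rightarrow> 'c) \<Rightarrow> ('c \<Rightarrow> ('c \<times> 'c) list) \<Rightarrow> ('c \<Rightarrow> 'k) \<Rightarrow> 'c \<Rightarrow> 'c" where
  "hit sc Delta f c = (\<Sum>(a,b)\<leftarrow>Delta c. sc (f b) a)"

definition is_left_dual_module ::
  "('k::field \<Rightarrow> 'c::ab_group_add \<Rightarrow> 'c) \<Rightarrow> ('c \<Rightarrow> ('c \<times> 'c) list) \<Rightarrow> ('c \<Rightarrow> 'k) \<Rightarrow>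
   ('k \<Rightarrow> 'm::ab_group_add \<Rightarrow> 'm) \<Rightarrow> (('c \<Rightarrow> 'k) \<Rightarrow> 'm \<Rightarrow> 'm) \<Rightarrow> bool" where
  "is_left_dual_module sc Delta eps smM act \<longleftrightarrow>
     vector_space smM \<and>
     (\<forall>f\<in>dual sc. Vector_Spaces.linear smM smM (act f)) \<and>
     (\<forall>f\<in>dual sc. \<forall>g\<in>dual sc. \<forall>m r.
        act (\<lambda>c. f c + g c) m = act f m + act g m \<and>
        act (\<lambda>c. r * f c) m = smM r (act f m) \<and>
        act (conv Delta f g) m = act f (act g m)) \<and>
     (\<forall>m. act eps m = m)"

definition is_right_comodule ::
  "('k::field \<Rightarrow> 'c::ab_group_add \<Rightarrow> 'c) \<Rightarrow> ('c \<Rightarrow> ('c \<times> 'c) list) \<Rightarrow> ('c \<Rightarrow> 'k) \<Rightarrow>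
   ('k \<Rightarrow> 'm::ab_group_add \<Rightarrow> 'm) \<Rightarrow> ('m \<Rightarrow> ('m \<times> 'c) list) \<Rightarrow> bool" where
  "is_right_comodule sc Delta eps smM rho \<longleftrightarrow>
     vector_space smM \<and>
     (\<forall>\<mu>\<in>dual smM. \<forall>f\<in>dual sc. \<forall>x y r.
        tens (rho (x + y)) \<mu> f = tens (rho x) \<mu> f + tens (rho y) \<mu> f \<and>
        tens (rho (smM r x)) \<mu> f = r * tens (rho x) \<mu> f) \<and>
     (\<forall>m. (\<Sum>(x,c)\<leftarrow>rho m. smM (eps c) x) = m) \<and>
     (\<forall>\<mu>\<in>dual smM. \<forall>f\<in>dual sc. \<forall>g\<in>dual sc. \<forall>m.
        (\<Sum>(x,c)\<leftarrow>rho m. tens (rho x) \<mu> f * g c) = (\<Sum>(x,c)\<leftarrow>rho m. \<mu> x * tens (Delta c) f g))"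

definition is_rational ::
  "('k::field \<Rightarrow> 'c::ab_group_add \<Rightarrow> 'c) \<Rightarrow> ('c \<Rightarrow> ('c \<times> 'c) list) \<Rightarrow> ('c \<Rightarrow> 'k) \<Rightarrow>
   ('k \<Rightarrow> 'm::ab_group_add \<Rightarrow> 'm) \<Rightarrow> (('c \<Rightarrow> 'k) \<Rightarrow> 'm \<Rightarrow> 'm) \<Rightarrow> bool" where
  "is_rational sc Delta eps smM act \<longleftrightarrow>
     (\<exists>rho. is_right_comodule sc Delta eps smM rho \<and>
        (\<forall>f\<in>dual sc. \<forall>m. act f m = (\<Sum>(x,c)\<leftarrow>rho m. smM (f c) x)))"

definition is_submodule ::
  "('k::field \<Rightarrow> 'c::ab_group_add \<Rightarrow> 'c) \<Rightarrow> ('k \<Rightarrow> 'm::ab_group_add \<Rightarrow> 'm) \<Rightarrow>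
   (('c \<Rightarrow> 'k) \<Rightarrow> 'm \<Rightarrow> 'm) \<Rightarrow> 'm set \<Rightarrow> bool" where
  "is_submodule sc smM act N \<longleftrightarrow>
     0 \<in> N \<and> (\<forall>x\<in>N. \<forall>y\<in>N. x + y \<in> N) \<and> (\<forall>r. \<forall>x\<in>N. smM r x \<in> N) \<and>
     (\<forall>f\<in>dual sc. \<forall>x\<in>N. act f x \<in> N)"

definition is_simple_module ::
  "('k::field \<Rightarrow> 'c::ab_group_add \<Rightarrow> 'c) \<Rightarrow> ('c \<Rightarrow> ('c \<times> 'c) list) \<Rightarrow> ('c \<Rightarrow> 'k) \<Rightarrow>
   ('k \<Rightarrow> 'm::ab_group_add \<Rightarrow> 'm) \<Rightarrow> (('c \<Rightarrow> 'k) \<Rightarrow> 'm \<Rightarrow> 'm) \<Rightarrow> bool" where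
  "is_simple_module sc Delta eps smM act \<longleftrightarrow>
     is_left_dual_module sc Delta eps smM act \<and> (UNIV :: 'm set) \<noteq> {0} \<and>
     (\<forall>N. is_submodule sc smM act N \<longrightarrow> N = {0} \<or> N = UNIV)"

definition embeds_in_product ::
  "('k::field \<Rightarrow> 'c::ab_group_add \<Rightarrow> 'c) \<Rightarrow> ('c \<Rightarrow> ('c \<times> 'c) list) \<Rightarrow> ('c \<Rightarrow> 'i \<Rightarrow> 'c \<Rightarrow> 'k) \<Rightarrow> bool" where
  "embeds_in_product sc Delta \<phi> \<longleftrightarrow>
     inj \<phi> \<and> (\<forall>x i. \<phi> x i \<in> dual sc) \<and>
     (\<forall>x y. \<phi> (x + y) = (\<lambda>i c. \<phi> x i c + \<phi> y i c)) \<and>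
     (\<forall>f\<in>dual sc. \<forall>x i. \<phi> (hit sc Delta f x) i = conv Delta f (\<phi> x i))"

definition left_QcF ::
  "'i itself \<Rightarrow> ('k::field \<Rightarrow> 'c::ab_group_add \<Rightarrow> 'c) \<Rightarrow> ('c \<Rightarrow> ('c \<times> 'c) list) \<Rightarrow> bool" where
  "left_QcF (_ :: 'i itself) sc Delta \<longleftrightarrow> (\<exists>\<phi> :: 'c \<Rightarrow> 'i \<Rightarrow> 'c \<Rightarrow> 'k. embeds_in_product sc Delta \<phi>)"

definition embeds_in_dual ::
  "('k::field \<Rightarrow> 'c::ab_group_add \<Rightarrow> 'c) \<Rightarrow> ('c \<Rightarrow> ('c \<times> 'c) list) \<Rightarrow>
   (('c \<Rightarrow> 'k) \<Rightarrow> 'm::ab_group_add \<Rightarrow> 'm) \<Rightarrow> bool" where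
  "embeds_in_dual sc Delta act \<longleftrightarrow>
     (\<exists>\<phi> :: 'm \<Rightarrow> 'c \<Rightarrow> 'k. inj \<phi> \<and> (\<forall>m. \<phi> m \<in> dual sc) \<and>
        (\<forall>m n. \<phi> (m + n) = (\<lambda>c. \<phi> m c + \<phi> n c)) \<and>
        (\<forall>f\<in>dual sc. \<forall>m. \<phi> (act f m) = conv Delta f (\<phi> m)))"

definition left_Rat_Kasch ::
  "'m::ab_group_add itself \<Rightarrow> ('k::field \<Rightarrow> 'c::ab_group_add \<Rightarrow> 'c) \<Rightarrow> ('c \<Rightarrow> ('c \<times> 'c) list) \<Rightarrow> ('c \<Rightarrow> 'k) \<Rightarrow> bool" where
  "left_Rat_Kasch (_ :: 'm itself) sc Delta eps \<longleftrightarrow>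
     (\<forall>(smM :: 'k \<Rightarrow> 'm \<Rightarrow> 'm) act.
        is_simple_module sc Delta eps smM act \<and> is_rational sc Delta eps smM act \<longrightarrow>
        embeds_in_dual sc Delta act)"

end

theory Submission
  imports Defs
begin

lemma vs_self: "vector_space ((*) :: 'k::field \<Rightarrow> 'k \<Rightarrow> 'k)"
  by unfold_locales (auto simp: algebra_simps)

lemma separate:
  fixes sc :: "'k::field \<Rightarrow> 'c::ab_group_add \<Rightarrow> 'c"
  assumes vs: "vector_space sc" and x: "x \<noteq> 0"
  shows "\<exists>g\<in>dual sc. g x \<noteq> 0"
proof -
  interpret p: vector_space_pair sc "(*) :: 'k \<Rightarrow> 'k \<Rightarrow> 'k"
    using vs vs_self by (simp add: vector_space_pair_def)
  have "p.vs1.independent {x}"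
    using x p.vs1.independent_insertI[of x "{}"] by simp
  from p.linear_independent_extend[OF this, of "\<lambda>_. 1"]
  obtain g where "Vector_Spaces.linear sc (*) g" "g x = 1" by auto
  thus ?thesis unfolding dual_def by force
qed


lemma addhom_sum:
  fixes T :: "'a::ab_group_add \<Rightarrow> 'b::ab_group_add"
  assumes "\<And>x y. T (x + y) = T x + T y"
  shows "T (sum_list (map F xs)) = sum_list (map (\<lambda>z. T (F z)) xs)"
proof -
  have "T 0 = T 0 + T 0" using assms[of 0 0] by simp
  hence T0: "T 0 = 0" by simp
  show ?thesis by (induction xs) (simp_all add: T0 assms)
qed

lemma dual_add: "g \<in> dual sc \<Longrightarrow> g (x + y) = g x + g y"
  unfolding dual_def by (simp add: Vector_Spaces.linear_iff)
lemma dual_scale: "g \<in> dual sc \<Longrightarrow> g (sc r x) = r * g x"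
  unfolding dual_def by (simp add: Vector_Spaces.linear_iff)

lemma dual_sum: "g \<in> dual sc \<Longrightarrow> g (sum_list (map F xs)) = sum_list (map (\<lambda>z. g (F z)) xs)"
  by (rule addhom_sum) (simp add: dual_add)

lemma dual_zero: "g \<in> dual sc \<Longrightarrow> g 0 = 0"
  using dual_sum[of g sc id "[]"] by simp

lemma dual_smult: "g \<in> dual sc \<Longrightarrow> (\<lambda>c. r * g c) \<in> dual sc"
  unfolding dual_def by (auto simp: Vector_Spaces.linear_iff algebra_simps)
theorem proposition4p2:
  fixes sc :: "'k::field \<Rightarrow> 'c::ab_group_add \<Rightarrow> 'c"
    and Delta :: "'c \<Rightarrow> ('c \<times> 'c) list"
    and eps :: "'c \<Rightarrow> 'k"
  assumes "is_coalgebra sc Delta eps"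
    and "left_QcF TYPE('i) sc Delta"
  shows "left_Rat_Kasch TYPE('m::ab_group_add) sc Delta eps"
  unfolding left_Rat_Kasch_def
proof (intro allI impI)
  fix smM :: "'k \<Rightarrow> 'm \<Rightarrow> 'm" and act
  assume A: "is_simple_module sc Delta eps smM act \<and> is_rational sc Delta eps smM act"
  have vsC: "vector_space sc" and epsd: "eps \<in> dual sc"
    and Dadd: "\<And>f g x y. f \<in> dual sc \<Longrightarrow> g \<in> dual sc \<Longrightarrow>
        tens (Delta (x + y)) f g = tens (Delta x) f g + tens (Delta y) f g"
    and Dsc: "\<And>f g x r. f \<in> dual sc \<Longrightarrow> g \<in> dual sc \<Longrightarrow>
        tens (Delta (sc r x)) f g = r * tens (Delta x) f g"
    using assms(1) unfolding is_coalgebra_def by auto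
  obtain \<phi> :: "'c \<Rightarrow> 'i \<Rightarrow> 'c \<Rightarrow> 'k" where phi: "embeds_in_product sc Delta \<phi>"
    using assms(2) unfolding left_QcF_def by auto
  have phinj: "inj \<phi>" and phid: "\<And>x i. \<phi> x i \<in> dual sc"
    and phiadd: "\<And>x y. \<phi> (x + y) = (\<lambda>i c. \<phi> x i c + \<phi> y i c)"
    and phihit: "\<And>f x i. f \<in> dual sc \<Longrightarrow> \<phi> (hit sc Delta f x) i = conv Delta f (\<phi> x i)"
    using phi unfolding embeds_in_product_def by auto
  have simple: "is_simple_module sc Delta eps smM act" using A by auto
  have vsM: "vector_space smM"
    and actadd: "\<And>f g m. f \<in> dual sc \<Longrightarrow> g \<in> dual sc \<Longrightarrow> act (\<lambda>c. f c + g c) m = act f m + act g m"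
    and actsc: "\<And>f g m r. f \<in> dual sc \<Longrightarrow> act (\<lambda>c. r * f c) m = smM r (act f m)"
    and acteps: "\<And>m. act eps m = m"
    and nontriv: "(UNIV :: 'm set) \<noteq> {0}"
    and simp_sub: "\<And>N. is_submodule sc smM act N \<Longrightarrow> N = {0} \<or> N = UNIV"
    using simple unfolding is_simple_module_def is_left_dual_module_def by auto
  obtain rho where rc: "is_right_comodule sc Delta eps smM rho"
    and actrho: "\<And>f m. f \<in> dual sc \<Longrightarrow> act f m = (\<Sum>(x,c)\<leftarrow>rho m. smM (f c) x)"
    using A unfolding is_rational_def by auto
  have radd: "\<And>\<mu> f x y. \<mu> \<in> dual smM \<Longrightarrow> f \<in> dual sc \<Longrightarrow>
        tens (rho (x + y)) \<mu> f = tens (rho x) \<mu> f + tens (rho y) \<mu> f"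
    and rsc: "\<And>\<mu> f x r. \<mu> \<in> dual smM \<Longrightarrow> f \<in> dual sc \<Longrightarrow>
        tens (rho (smM r x)) \<mu> f = r * tens (rho x) \<mu> f"
    and rcounit: "\<And>m. (\<Sum>(x,c)\<leftarrow>rho m. smM (eps c) x) = m"
    and rcoass: "\<And>\<mu> f g m. \<mu> \<in> dual smM \<Longrightarrow> f \<in> dual sc \<Longrightarrow> g \<in> dual sc \<Longrightarrow>
        (\<Sum>(x,c)\<leftarrow>rho m. tens (rho x) \<mu> f * g c) = (\<Sum>(x,c)\<leftarrow>rho m. \<mu> x * tens (Delta c) f g)"
    using rc unfolding is_right_comodule_def by auto
  obtain m0 :: 'm where m0: "m0 \<noteq> 0" using nontriv by auto
  obtain \<mu> where mud: "\<mu> \<in> dual smM" and mum0: "\<mu> m0 \<noteq> 0"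
    using separate[OF vsM m0] by auto
  define \<psi> where "\<psi> m = (\<Sum>(x,c)\<leftarrow>rho m. sc (\<mu> x) c)" for m
  have gpsi: "g (\<psi> m) = tens (rho m) \<mu> g" if g: "g \<in> dual sc" for g m
    unfolding \<psi>_def tens_def using g
    by (simp add: dual_sum[OF g] dual_scale[OF g] case_prod_beta')
  have psiadd: "\<psi> (m + n) = \<psi> m + \<psi> n" for m n
  proof (rule ccontr)
    assume "\<psi> (m + n) \<noteq> \<psi> m + \<psi> n"
    hence "\<psi> (m + n) - (\<psi> m + \<psi> n) \<noteq> 0" by simp
    then obtain g where g: "g \<in> dual sc" "g (\<psi> (m + n) - (\<psi> m + \<psi> n)) \<noteq> 0"
      using separate[OF vsC] by blast
    have "g (\<psi> (m + n) - (\<psi> m + \<psi> n)) = g (\<psi> (m + n)) - (g (\<psi> m) + g (\<psi> n))"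
      using dual_add[OF g(1)] by (metis add_diff_cancel diff_add_cancel)
    also have "\<dots> = 0" using gpsi[OF g(1)] radd[OF mud g(1)] by simp
    finally show False using g(2) by simp
  qed
  have psi0: "\<psi> 0 = 0" using psiadd[of 0 0] by simp
  have epspsi: "eps (\<psi> m0) = \<mu> m0"
  proof -
    have "eps (\<psi> m0) = (\<Sum>(x,c)\<leftarrow>rho m0. \<mu> x * eps c)"
      using gpsi[OF epsd] by (simp add: tens_def)
    also have "\<dots> = (\<Sum>(x,c)\<leftarrow>rho m0. \<mu> (smM (eps c) x))"
      by (rule arg_cong[where f=sum_list], rule map_cong)
         (auto simp: dual_scale[OF mud])
    also have "\<dots> = \<mu> (\<Sum>(x,c)\<leftarrow>rho m0. smM (eps c) x)"
      by (simp add: dual_sum[OF mud] case_prod_beta')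
    also have "\<dots> = \<mu> m0" using rcounit by simp
    finally show ?thesis .
  qed
  have psim0: "\<psi> m0 \<noteq> 0" using epspsi mum0 dual_zero[OF epsd] by auto
  have psiact: "\<psi> (act f m) = hit sc Delta f (\<psi> m)" if f: "f \<in> dual sc" for f m
  proof (rule ccontr)
    assume "\<psi> (act f m) \<noteq> hit sc Delta f (\<psi> m)"
    hence "\<psi> (act f m) - hit sc Delta f (\<psi> m) \<noteq> 0" by simp
    then obtain g where g: "g \<in> dual sc" "g (\<psi> (act f m) - hit sc Delta f (\<psi> m)) \<noteq> 0"
      using separate[OF vsC] by blast
    have L: "g (\<psi> (act f m)) = (\<Sum>(x,c)\<leftarrow>rho m. \<mu> x * tens (Delta c) g f)"
    proof -
      have "g (\<psi> (act f m)) = tens (rho (act f m)) \<mu> g" by (rule gpsi[OF g(1)])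
      also have "\<dots> = (\<Sum>(y,d)\<leftarrow>rho m. tens (rho (smM (f d) y)) \<mu> g)"
        unfolding actrho[OF f]
        by (subst addhom_sum[where T="\<lambda>z. tens (rho z) \<mu> g"])
           (auto simp: radd[OF mud g(1)] case_prod_beta')
      also have "\<dots> = (\<Sum>(y,d)\<leftarrow>rho m. tens (rho y) \<mu> g * f d)"
        by (rule arg_cong[where f=sum_list], rule map_cong)
           (auto simp: rsc[OF mud g(1)])
      also have "\<dots> = (\<Sum>(x,c)\<leftarrow>rho m. \<mu> x * tens (Delta c) g f)"
        by (rule rcoass[OF mud g(1) f])
      finally show ?thesis .
    qed
    have R: "g (hit sc Delta f (\<psi> m)) = (\<Sum>(x,c)\<leftarrow>rho m. \<mu> x * tens (Delta c) g f)"
    proof -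
      have "g (hit sc Delta f (\<psi> m)) = tens (Delta (\<psi> m)) g f"
        unfolding hit_def tens_def
        by (simp add: dual_sum[OF g(1)] dual_scale[OF g(1)] case_prod_beta' mult.commute)
      also have "\<dots> = (\<Sum>(x,c)\<leftarrow>rho m. tens (Delta (sc (\<mu> x) c)) g f)"
        unfolding \<psi>_def
        by (subst addhom_sum[where T="\<lambda>z. tens (Delta z) g f"])
           (auto simp: Dadd[OF g(1) f] case_prod_beta')
      also have "\<dots> = (\<Sum>(x,c)\<leftarrow>rho m. \<mu> x * tens (Delta c) g f)"
        by (rule arg_cong[where f=sum_list], rule map_cong)
           (auto simp: Dsc[OF g(1) f])
      finally show ?thesis .
    qed
    have "g (\<psi> (act f m) - hit sc Delta f (\<psi> m)) = g (\<psi> (act f m)) - g (hit sc Delta f (\<psi> m))"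
      using dual_add[OF g(1)] by (metis add_diff_cancel diff_add_cancel)
    also have "\<dots> = 0" using L R by simp
    finally show False using g(2) by simp
  qed
  have phi0: "\<phi> 0 = (\<lambda>i c. 0)"
  proof -
    have "\<phi> 0 = (\<lambda>i c. \<phi> 0 i c + \<phi> 0 i c)" using phiadd[of 0 0] by simp
    hence "\<And>i c. \<phi> 0 i c = \<phi> 0 i c + \<phi> 0 i c" by (metis)
    hence "\<And>i c. \<phi> 0 i c = 0" by (metis add_left_cancel add.right_neutral)
    thus ?thesis by (intro ext) simp
  qed
  have "\<phi> (\<psi> m0) \<noteq> (\<lambda>i c. 0)"
    using psim0 phinj phi0 by (metis injD)
  then obtain i where i: "\<phi> (\<psi> m0) i \<noteq> (\<lambda>c. 0)" by auto
  define \<Theta> where "\<Theta> m = \<phi> (\<psi> m) i" for m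
  have Tadd: "\<Theta> (m + n) = (\<lambda>c. \<Theta> m c + \<Theta> n c)" for m n
    unfolding \<Theta>_def psiadd phiadd by simp
  have Tact: "\<Theta> (act f m) = conv Delta f (\<Theta> m)" if "f \<in> dual sc" for f m
    unfolding \<Theta>_def psiact[OF that] phihit[OF that] ..
  have T0: "\<Theta> 0 = (\<lambda>c. 0)" unfolding \<Theta>_def psi0 phi0 ..
  define N where "N = {m. \<Theta> m = (\<lambda>c. 0)}"
  have conv0: "conv Delta f (\<lambda>c. 0) = (\<lambda>c. 0)" for f :: "'c \<Rightarrow> 'k"
    unfolding conv_def tens_def by (simp add: case_prod_beta')
  have actN: "act f x \<in> N" if "f \<in> dual sc" "x \<in> N" for f x
    using that Tact conv0 unfolding N_def by simp
  have "is_submodule sc smM act N"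
    unfolding is_submodule_def
  proof (intro conjI ballI allI)
    show "0 \<in> N" using T0 unfolding N_def by simp
  next
    fix x y assume "x \<in> N" "y \<in> N" thus "x + y \<in> N" using Tadd unfolding N_def by simp
  next
    fix r x assume x: "x \<in> N"
    have "smM r x = act (\<lambda>c. r * eps c) x" using actsc[OF epsd] acteps by simp
    thus "smM r x \<in> N" using actN[OF dual_smult[OF epsd] x] by simp
  next
    fix f x assume "f \<in> dual sc" "x \<in> N" thus "act f x \<in> N" by (rule actN)
  qed
  moreover have "m0 \<notin> N" using i unfolding N_def \<Theta>_def by simp
  ultimately have N0: "N = {0}" using simp_sub by blast
  have "inj \<Theta>"
  proof (rule injI)
    fix m n assume eq: "\<Theta> m = \<Theta> n"
    have "\<Theta> m = (\<lambda>c. \<Theta> (m - n) c + \<Theta> n c)" using Tadd[of "m - n" n] by simp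
    hence "\<And>c. \<Theta> (m - n) c = 0" using eq by (metis add_cancel_left_left)
    hence "m - n \<in> N" unfolding N_def by auto
    thus "m = n" using N0 by simp
  qed
  thus "embeds_in_dual sc Delta act"
    unfolding embeds_in_dual_def
    using Tadd Tact phid unfolding \<Theta>_def by blast
qed

end
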